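(* Let $d\ge 3$ be odd. Then $G_d$ is spherically transitive and fractal.
   Context: Let $d\ge 3$, $X=\{1,\dots,d\}$, $T$ the $d$-regular rooted tree with vertex set $X^*$. $\mathrm{Aut}(T)$ is the group of root-preserving automorphisms with product left-to-right: $(gh)(u)=h(g(u))$. Sections $g|_u$ are defined by $g(uv)=g(u)\,g|_u(v)$; we write $g=(g|_1,\dots,g|_d)\lambda_g$ with $\lambda_g\in S_d$ the action on the first level; $e$ is the identity; $\overline{j}\in\{1,\dots,d\}$ denotes $j$ mod $d$. $G_d=\langle a_1,\dots,a_d\rangle\le\mathrm{Aut}(T)$ where $a_i$ acts on the first level as $(i\ \overline{i+1})$, with $a_i|_i=a_i$, $a_i|_{\overline{i+1}}=a_{\overline{i+1}}$, and $a_i|_x=e$ otherwise. $G_d$ is self-similar (closed under sections). A subgroup $G\le\mathrm{Aut}(T)$ is spherically transitive if it acts transitively on $X^k$ for every $k$. For $u\in X^*$, $\mathrm{St}_G(u)$ is the stabilizer of $u$ and $\pi_u:\mathrm{St}_G(u)\to G$, $\pi_u(g)=g|_u$. A self-similar $G$ is fractal if $\pi_u(\mathrm{St}_G(u))=G$ for every vertex $u$. *)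

theory Defs
  imports Main
begin

text \<open>Tree automorphisms are represented as functions on nat lists that act as the
  identity outside the set of words. Group product (gh)(u) = h(g(u)) is h \<circ> g.\<close>

definition words :: "nat \<Rightarrow> nat list set" where
  "words d = {w. set w \<subseteq> {1..d}}"

definition nxt :: "nat \<Rightarrow> nat \<Rightarrow> nat" where
  "nxt d i = (if i = d then 1 else i + 1)"

fun genrec :: "nat \<Rightarrow> nat \<Rightarrow> nat list \<Rightarrow> nat list" where
  "genrec d i [] = []"
| "genrec d i (x # w) =
     (if x = i then nxt d i # genrec d i w
      else if x = nxt d i then i # genrec d (nxt d i) w
      else x # w)"

definition gen :: "nat \<Rightarrow> nat \<Rightarrow> nat list \<Rightarrow> nat list" where
  "gen d i u = (if u \<in> words d then genrec d i u else u)"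

inductive_set Gd :: "nat \<Rightarrow> (nat list \<Rightarrow> nat list) set" for d where
  Gd_id: "id \<in> Gd d"
| Gd_gen: "g \<in> Gd d \<Longrightarrow> i \<in> {1..d} \<Longrightarrow> gen d i \<circ> g \<in> Gd d"
| Gd_inv: "g \<in> Gd d \<Longrightarrow> i \<in> {1..d} \<Longrightarrow> inv (gen d i) \<circ> g \<in> Gd d"

definition spherically_transitive :: "nat \<Rightarrow> (nat list \<Rightarrow> nat list) set \<Rightarrow> bool" where
  "spherically_transitive d G \<longleftrightarrow>
     (\<forall>k. \<forall>u \<in> words d. \<forall>v \<in> words d. length u = k \<longrightarrow> length v = k \<longrightarrow>
        (\<exists>g \<in> G. g u = v))"

text \<open>Section g|_u, defined by g(uv) = g(u) g|_u(v).\<close>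
definition sect :: "nat \<Rightarrow> (nat list \<Rightarrow> nat list) \<Rightarrow> nat list \<Rightarrow> nat list \<Rightarrow> nat list" where
  "sect d g u = (\<lambda>v. if v \<in> words d then drop (length u) (g (u @ v)) else v)"

definition stabilizer :: "(nat list \<Rightarrow> nat list) set \<Rightarrow> nat list \<Rightarrow> (nat list \<Rightarrow> nat list) set" where
  "stabilizer G u = {g \<in> G. g u = u}"

definition fractal :: "nat \<Rightarrow> (nat list \<Rightarrow> nat list) set \<Rightarrow> bool" where
  "fractal d G \<longleftrightarrow> (\<forall>u \<in> words d. (\<lambda>g. sect d g u) ` stabilizer G u = G)"

end

theory Submission
  imports Defs
begin

lemma words_Cons[simp]: "x # w \<in> words d \<longleftrightarrow> x \<in> {1..d} \<and> w \<in> words d"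
  by (auto simp: words_def)
lemma words_Nil[simp]: "[] \<in> words d" by (simp add: words_def)
lemma words_append[simp]: "u @ v \<in> words d \<longleftrightarrow> u \<in> words d \<and> v \<in> words d"
  by (auto simp: words_def)
lemma words_drop: "u \<in> words d \<Longrightarrow> drop n u \<in> words d"
  by (auto simp: words_def dest: in_set_dropD)
lemma words_take: "u \<in> words d \<Longrightarrow> take n u \<in> words d"
  by (auto simp: words_def dest: in_set_takeD)

definition auto :: "nat \<Rightarrow> (nat list \<Rightarrow> nat list) \<Rightarrow> bool" where
  "auto d g \<longleftrightarrow> bij g \<and> (\<forall>u. u \<notin> words d \<longrightarrow> g u = u)
     \<and> (\<forall>u\<in>words d. g u \<in> words d \<and> length (g u) = length u)
     \<and> (\<forall>u\<in>words d. \<forall>v\<in>words d. take (length u) (g (u @ v)) = g u)"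

lemma autoD:
  assumes "auto d g"
  shows "bij g" "u \<notin> words d \<Longrightarrow> g u = u" "u \<in> words d \<Longrightarrow> g u \<in> words d"
    "u \<in> words d \<Longrightarrow> length (g u) = length u"
    "u \<in> words d \<Longrightarrow> v \<in> words d \<Longrightarrow> take (length u) (g (u @ v)) = g u"
  using assms by (auto simp: auto_def)

lemma sect_app: "v \<in> words d \<Longrightarrow> sect d g u v = drop (length u) (g (u @ v))"
  by (simp add: sect_def)
lemma sect_nonword: "v \<notin> words d \<Longrightarrow> sect d g u v = v"
  by (simp add: sect_def)

lemma auto_split:
  assumes "auto d g" "u \<in> words d" "v \<in> words d"
  shows "g (u @ v) = g u @ sect d g u v"
proof -
  have "g (u@v) = take (length u) (g (u@v)) @ drop (length u) (g (u@v))" by simp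
  then show ?thesis using assms by (simp add: autoD sect_app)
qed

lemma sect_word: "auto d g \<Longrightarrow> u \<in> words d \<Longrightarrow> v \<in> words d \<Longrightarrow> sect d g u v \<in> words d"
  by (simp add: sect_app autoD words_drop)

lemma sect_length: "auto d g \<Longrightarrow> u \<in> words d \<Longrightarrow> v \<in> words d \<Longrightarrow> length (sect d g u v) = length v"
  by (simp add: sect_app autoD)

lemma auto_id: "auto d id" by (simp add: auto_def)

lemma auto_comp:
  assumes g: "auto d g" and h: "auto d h" shows "auto d (g \<circ> h)"
proof -
  have "bij (g \<circ> h)" using g h autoD bij_comp by blast
  moreover have "\<forall>u. u \<notin> words d \<longrightarrow> (g \<circ> h) u = u" using autoD(2)[OF g] autoD(2)[OF h] by simp
  moreover have "\<forall>u\<in>words d. (g \<circ> h) u \<in> words d \<and> length ((g \<circ> h) u) = length u"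
    using g h autoD by simp
  moreover have "take (length u) ((g \<circ> h) (u @ v)) = (g \<circ> h) u" if "u \<in> words d" "v \<in> words d" for u v
  proof -
    have "(g \<circ> h) (u @ v) = g (h u @ sect d h u v)" using auto_split[OF h that] by simp
    moreover have "take (length (h u)) (g (h u @ sect d h u v)) = g (h u)"
      using autoD(5)[OF g] autoD(3)[OF h] sect_word[OF h] that by simp
    ultimately show ?thesis using autoD(4)[OF h that(1)] by simp
  qed
  ultimately show ?thesis unfolding auto_def by blast
qed

lemma auto_inv:
  assumes a: "auto d g" shows "auto d (inv g)"
proof -
  have b: "bij g" using a autoD by blast
  have ff: "g (inv g u) = u" for u using b by (simp add: bij_is_surj surj_f_inv_f)
  have fi: "inv g (g u) = u" for u using b by (simp add: bij_is_inj)
  have nw: "inv g u = u" if "u \<notin> words d" for u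
    using a that fi by (metis autoD(2))
  have w: "inv g u \<in> words d" if "u \<in> words d" for u
    using a that ff by (metis autoD(2))
  have l: "length (inv g u) = length u" if "u \<in> words d" for u
    using a w[OF that] ff by (metis autoD(4))
  have p: "take (length u) (inv g (u @ v)) = inv g u" if "u \<in> words d" "v \<in> words d" for u v
  proof -
    define w0 where "w0 = inv g (u @ v)"
    have w0w: "w0 \<in> words d" using w that w0_def by simp
    have lw: "length w0 = length u + length v" using l that w0_def by simp
    have lt: "length (take (length u) w0) = length u" using lw by simp
    have "take (length (take (length u) w0)) (g (take (length u) w0 @ drop (length u) w0)) = g (take (length u) w0)"
      using autoD(5)[OF a, of "take (length u) w0" "drop (length u) w0"] w0w
      by (simp add: words_take words_drop)
    then have "take (length u) (g w0) = g (take (length u) w0)" unfolding lt by simp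
    moreover have "g w0 = u @ v" using ff w0_def by simp
    ultimately have "g (take (length u) w0) = u" by simp
    then show ?thesis using fi w0_def by metis
  qed
  show ?thesis unfolding auto_def
    using b bij_imp_bij_inv nw w l p by blast
qed

lemma sect_comp:
  assumes g: "auto d g" and h: "auto d h" and u: "u \<in> words d"
  shows "sect d (g \<circ> h) u = sect d g (h u) \<circ> sect d h u"
proof (rule ext)
  fix v show "sect d (g \<circ> h) u v = (sect d g (h u) \<circ> sect d h u) v"
  proof (cases "v \<in> words d")
    case True
    have hw: "h u \<in> words d" "sect d h u v \<in> words d" using h u True by (auto simp: autoD sect_word)
    have "sect d (g \<circ> h) u v = drop (length u) (g (h (u @ v)))" using True by (simp add: sect_app)
    also have "\<dots> = drop (length u) (g (h u) @ sect d g (h u) (sect d h u v))"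
      using auto_split[OF h u True] auto_split[OF g hw] by simp
    also have "\<dots> = sect d g (h u) (sect d h u v)" using g h u by (simp add: autoD)
    finally show ?thesis by simp
  next
    case False then show ?thesis by (simp add: sect_nonword)
  qed
qed

lemma sect_id: "u \<in> words d \<Longrightarrow> sect d id u = id"
  by (rule ext) (simp add: sect_def)

lemma sect_Nil: "auto d g \<Longrightarrow> sect d g [] = g"
  by (rule ext) (auto simp: sect_def autoD)

lemma sect_append: "u \<in> words d \<Longrightarrow> w \<in> words d \<Longrightarrow> sect d g (u @ w) = sect d (sect d g u) w"
  by (rule ext) (simp add: sect_def add.commute)

lemma sect_inv:
  assumes a: "auto d g" and u: "u \<in> words d"
  shows "sect d (inv g) (g u) = inv (sect d g u)"
proof -
  have b: "bij g" using a autoD by blast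
  have ai: "auto d (inv g)" using auto_inv[OF a] .
  have gu: "g u \<in> words d" using a u autoD by blast
  have 1: "sect d (inv g) (g u) \<circ> sect d g u = id"
    using sect_comp[OF ai a u] sect_id[OF u] b by (simp add: bij_is_inj)
  have gi: "g \<circ> inv g = id" by (meson b bij_is_surj surj_iff)
  have iu: "inv g (g u) = u" using b by (simp add: bij_is_inj)
  have 2: "sect d g u \<circ> sect d (inv g) (g u) = id"
    using sect_comp[OF a ai gu] sect_id[OF gu] gi iu by simp
  show ?thesis using inv_unique_comp[OF 2 1] by simp
qed


lemma nxt_in: "i \<in> {1..d} \<Longrightarrow> nxt d i \<in> {1..d}"
  by (auto simp: nxt_def)
lemma nxt_neq: "d \<ge> 2 \<Longrightarrow> i \<in> {1..d} \<Longrightarrow> nxt d i \<noteq> i"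
  by (auto simp: nxt_def)
lemma nxt_ge[simp]: "Suc 0 \<le> nxt d i" by (simp add: nxt_def)
lemma nxt_le[simp]: "Suc 0 \<le> i \<Longrightarrow> i \<le> d \<Longrightarrow> nxt d i \<le> d" by (simp add: nxt_def)

fun geninvrec :: "nat \<Rightarrow> nat \<Rightarrow> nat list \<Rightarrow> nat list" where
  "geninvrec d i [] = []"
| "geninvrec d i (x # w) = (if x = nxt d i then i # geninvrec d i w
      else if x = i then nxt d i # geninvrec d (nxt d i) w else x # w)"

lemma genrec_inv1: "d \<ge> 2 \<Longrightarrow> i \<in> {1..d} \<Longrightarrow> geninvrec d i (genrec d i w) = w"
  by (induction w arbitrary: i) (auto simp: nxt_neq nxt_in)
lemma genrec_inv2: "d \<ge> 2 \<Longrightarrow> i \<in> {1..d} \<Longrightarrow> genrec d i (geninvrec d i w) = w"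
  by (induction w arbitrary: i) (auto simp: nxt_neq nxt_in)
lemma genrec_words: "i \<in> {1..d} \<Longrightarrow> w \<in> words d \<Longrightarrow> genrec d i w \<in> words d"
  by (induction w arbitrary: i) (auto simp: nxt_in)
lemma geninvrec_words: "i \<in> {1..d} \<Longrightarrow> w \<in> words d \<Longrightarrow> geninvrec d i w \<in> words d"
  by (induction w arbitrary: i) (auto simp: nxt_in)
lemma genrec_length: "length (genrec d i w) = length w"
  by (induction w arbitrary: i) auto
lemma genrec_take: "take (length u) (genrec d i (u @ v)) = genrec d i u"
  by (induction u arbitrary: i) auto

lemma gen_auto:
  assumes d: "d \<ge> 2" and i: "i \<in> {1..d}" shows "auto d (gen d i)"
proof -
  define g' where "g' = (\<lambda>u. if u \<in> words d then geninvrec d i u else u)"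
  have 1: "gen d i \<circ> g' = id"
    by (rule ext) (simp add: g'_def gen_def geninvrec_words[OF i] genrec_inv2[OF d i])
  have 2: "g' \<circ> gen d i = id"
    by (rule ext) (simp add: g'_def gen_def genrec_words[OF i] genrec_inv1[OF d i])
  have "bij (gen d i)" using o_bij[OF 2 1] .
  then show ?thesis unfolding auto_def
    by (auto simp: gen_def genrec_words[OF i] genrec_length genrec_take)
qed

lemma gen_Cons_i: "i \<in> {1..d} \<Longrightarrow> w \<in> words d \<Longrightarrow> gen d i (i # w) = nxt d i # gen d i w"
  by (simp add: gen_def)
lemma gen_Cons_nxt: "d \<ge> 2 \<Longrightarrow> i \<in> {1..d} \<Longrightarrow> w \<in> words d \<Longrightarrow>
   gen d i (nxt d i # w) = i # gen d (nxt d i) w"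
  using nxt_neq[of d i] nxt_in[of i d] by (simp add: gen_def)
lemma gen_Cons_other: "x \<noteq> i \<Longrightarrow> x \<noteq> nxt d i \<Longrightarrow> x \<in> {1..d} \<Longrightarrow> w \<in> words d \<Longrightarrow>
   gen d i (x # w) = x # w"
  by (simp add: gen_def)

lemma sect_gen_i: "i \<in> {1..d} \<Longrightarrow> sect d (gen d i) [i] = gen d i"
  by (rule ext) (auto simp: sect_def gen_def)
lemma sect_gen_nxt: "d \<ge> 2 \<Longrightarrow> i \<in> {1..d} \<Longrightarrow> sect d (gen d i) [nxt d i] = gen d (nxt d i)"
  using nxt_neq[of d i] nxt_in[of i d] by (intro ext) (auto simp: sect_def gen_def)
lemma sect_gen_other: "x \<noteq> i \<Longrightarrow> x \<noteq> nxt d i \<Longrightarrow> x \<in> {1..d} \<Longrightarrow> sect d (gen d i) [x] = id"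
  by (rule ext) (auto simp: sect_def gen_def)
lemma gen_1_i: "i \<in> {1..d} \<Longrightarrow> gen d i [i] = [nxt d i]"
  by (simp add: gen_def)
lemma gen_1_nxt: "d \<ge> 2 \<Longrightarrow> i \<in> {1..d} \<Longrightarrow> gen d i [nxt d i] = [i]"
  using gen_Cons_nxt[of d i "[]"] by (simp add: gen_def)

lemma Gd_comp: "g \<in> Gd d \<Longrightarrow> h \<in> Gd d \<Longrightarrow> g \<circ> h \<in> Gd d"
  by (induction rule: Gd.induct) (simp_all add: comp_assoc Gd.intros)
lemma gen_Gd: "i \<in> {1..d} \<Longrightarrow> gen d i \<in> Gd d"
  using Gd_gen[OF Gd_id] by simp
lemma inv_gen_Gd: "i \<in> {1..d} \<Longrightarrow> inv (gen d i) \<in> Gd d"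
  using Gd_inv[OF Gd_id] by simp

lemma Gd_auto: assumes d: "d \<ge> 2" shows "g \<in> Gd d \<Longrightarrow> auto d g"
proof (induction rule: Gd.induct)
  case Gd_id show ?case by (rule auto_id)
next
  case (Gd_gen g i) show ?case by (rule auto_comp[OF gen_auto[OF d Gd_gen(2)] Gd_gen(3)])
next
  case (Gd_inv g i) show ?case by (rule auto_comp[OF auto_inv[OF gen_auto[OF d Gd_inv(2)]] Gd_inv(3)])
qed

lemma Gd_inv': assumes d: "d \<ge> 2" shows "g \<in> Gd d \<Longrightarrow> inv g \<in> Gd d"
proof (induction rule: Gd.induct)
  case Gd_id then show ?case using Gd.Gd_id[of d] by (simp only: inv_id)
next
  case (Gd_gen g i)
  have "inv (gen d i \<circ> g) = inv g \<circ> inv (gen d i)"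
    using o_inv_distrib autoD(1)[OF gen_auto[OF d Gd_gen(2)]] autoD(1)[OF Gd_auto[OF d Gd_gen(1)]] by blast
  then show ?case using Gd_comp[OF Gd_gen(3) inv_gen_Gd[OF Gd_gen(2)]] by metis
next
  case (Gd_inv g i)
  have b: "bij (gen d i)" using autoD(1)[OF gen_auto[OF d Gd_inv(2)]] .
  have "inv (inv (gen d i) \<circ> g) = inv g \<circ> inv (inv (gen d i))"
    using o_inv_distrib bij_imp_bij_inv[OF b] autoD(1)[OF Gd_auto[OF d Gd_inv(1)]] by blast
  also have "\<dots> = inv g \<circ> gen d i" using inv_inv_eq[OF b] by simp
  finally show ?case using Gd_comp[OF Gd_inv(3) gen_Gd[OF Gd_inv(2)]] by metis
qed

lemma sect_gen_Gd: "d \<ge> 2 \<Longrightarrow> i \<in> {1..d} \<Longrightarrow> u \<in> words d \<Longrightarrow> sect d (gen d i) u \<in> Gd d"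
proof (induction u arbitrary: i)
  case Nil then show ?case using sect_Nil[OF gen_auto] gen_Gd by simp
next
  case (Cons x u)
  have xw: "[x] \<in> words d" "u \<in> words d" "x \<in> {1..d}" using Cons by auto
  have e: "sect d (gen d i) (x # u) = sect d (sect d (gen d i) [x]) u"
    using sect_append[OF xw(1,2)] by simp
  show ?case
  proof (cases "x = i")
    case True then show ?thesis using e Cons sect_gen_i by simp
  next
    case F1: False
    show ?thesis
    proof (cases "x = nxt d i")
      case True then show ?thesis using e Cons sect_gen_nxt nxt_in by simp
    next
      case False
      then have "sect d (gen d i) (x # u) = id" using e F1 xw sect_gen_other sect_id by metis
      then show ?thesis using Gd_id by metis
    qed
  qed
qed

lemma sect_Gd: assumes d: "d \<ge> 2" shows "g \<in> Gd d \<Longrightarrow> u \<in> words d \<Longrightarrow> sect d g u \<in> Gd d"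
proof (induction arbitrary: u rule: Gd.induct)
  case Gd_id then show ?case using sect_id[of u d] Gd.Gd_id[of d] by metis
next
  case (Gd_gen g i)
  have "sect d (gen d i \<circ> g) u = sect d (gen d i) (g u) \<circ> sect d g u"
    using sect_comp[OF gen_auto[OF d Gd_gen(2)] Gd_auto[OF d Gd_gen(1)] Gd_gen(4)] .
  then show ?case using Gd_comp[OF sect_gen_Gd[OF d Gd_gen(2) autoD(3)[OF Gd_auto[OF d Gd_gen(1)] Gd_gen(4)]] Gd_gen(3)[OF Gd_gen(4)]] by metis
next
  case (Gd_inv g i)
  have ag: "auto d (gen d i)" using gen_auto[OF d Gd_inv(2)] .
  have gu: "g u \<in> words d" using autoD(3)[OF Gd_auto[OF d Gd_inv(1)]] Gd_inv(4) .
  define w where "w = inv (gen d i) (g u)"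
  have ww: "w \<in> words d" using autoD(3)[OF auto_inv[OF ag] gu] w_def by simp
  have gw: "gen d i w = g u" using w_def autoD(1)[OF ag] by (simp add: bij_is_surj surj_f_inv_f)
  have "sect d (inv (gen d i)) (g u) = inv (sect d (gen d i) w)"
    using sect_inv[OF ag ww] gw by simp
  then have "sect d (inv (gen d i)) (g u) \<in> Gd d"
    using Gd_inv' d sect_gen_Gd[OF d Gd_inv(2) ww] by simp
  moreover have "sect d (inv (gen d i) \<circ> g) u = sect d (inv (gen d i)) (g u) \<circ> sect d g u"
    using sect_comp[OF auto_inv[OF ag] Gd_auto[OF d Gd_inv(1)] Gd_inv(4)] .
  ultimately show ?case using Gd_comp[OF _ Gd_inv(3)[OF Gd_inv(4)]] by metis
qed


definition rot :: "nat \<Rightarrow> nat \<Rightarrow> nat \<Rightarrow> nat" where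
  "rot d x k = (x - 1 + k) mod d + 1"

lemma rot_in: "0 < d \<Longrightarrow> rot d x k \<in> {1..d}"
  by (auto simp: rot_def Suc_le_eq)
lemma rot_0: "x \<in> {1..d} \<Longrightarrow> rot d x 0 = x"
proof -
  assume x: "x \<in> {1..d}"
  then have a: "x - 1 < d" by auto
  have "(x - 1 + 0) mod d + 1 = x" using x by (simp only: add_0_right mod_less[OF a]) simp
  then show ?thesis unfolding rot_def .
qed
lemma rot_Suc: "0 < d \<Longrightarrow> rot d x (Suc k) = nxt d (rot d x k)"
proof -
  assume d: "0 < d"
  have "(x - 1 + Suc k) mod d = Suc (x - 1 + k) mod d" by simp
  also have "\<dots> = (if Suc ((x - 1 + k) mod d) = d then 0 else Suc ((x - 1 + k) mod d))"
    by (rule mod_Suc)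
  finally show ?thesis by (auto simp: rot_def nxt_def)
qed
lemma rot_d: "x \<in> {1..d} \<Longrightarrow> rot d x d = x"
proof -
  assume x: "x \<in> {1..d}"
  then have a: "x - 1 < d" by auto
  have "(x - 1 + d) mod d + 1 = x" using x by (simp only: mod_add_self2 mod_less[OF a]) simp
  then show ?thesis unfolding rot_def .
qed
lemma rot_surj: assumes "x \<in> {1..d}" "j \<in> {1..d}" shows "\<exists>k. rot d x k = j"
proof -
  have "rot d x (j + d - x) = j"
  proof -
    have "x - 1 + (j + d - x) = (j - 1) + d" using assms by auto
    moreover have a: "j - 1 < d" using assms by auto
    ultimately have "(x - 1 + (j + d - x)) mod d + 1 = j" using assms
      by (simp only: mod_add_self2 mod_less[OF a]) simp
    then show ?thesis unfolding rot_def .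
  qed
  then show ?thesis by blast
qed

primrec Pw :: "nat \<Rightarrow> nat \<Rightarrow> nat \<Rightarrow> nat list \<Rightarrow> nat list" where
  "Pw d x 0 = id"
| "Pw d x (Suc k) = gen d (rot d x k) \<circ> Pw d x k"

lemma Pw_Gd: "0 < d \<Longrightarrow> Pw d x k \<in> Gd d"
proof (induction k)
  case 0 then show ?case using Gd_id by (metis Pw.simps(1))
next
  case (Suc k) show ?case unfolding Pw.simps(2) by (rule Gd_gen[OF Suc.IH[OF Suc.prems] rot_in[OF Suc.prems]])
qed

lemma Pw_x:
  assumes d: "d \<ge> 2" and x: "x \<in> {1..d}"
  shows "Pw d x k [x] = [rot d x k] \<and> sect d (Pw d x k) [x] = Pw d x k"
proof (induction k)
  case 0 show ?case unfolding Pw.simps(1)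
  proof (intro conjI)
    show "id [x] = [rot d x 0]" using rot_0[OF x] by simp
    show "sect d id [x] = id" by (rule sect_id) (use x in simp)
  qed
next
  case (Suc k)
  have d0: "0 < d" using d by simp
  have r: "rot d x k \<in> {1..d}" using rot_in[OF d0] .
  have "sect d (Pw d x (Suc k)) [x] = sect d (gen d (rot d x k)) (Pw d x k [x]) \<circ> sect d (Pw d x k) [x]"
    using sect_comp[OF gen_auto[OF d r] Gd_auto[OF d Pw_Gd[OF d0]]] x by simp
  also have "\<dots> = Pw d x (Suc k)" using Suc sect_gen_i[OF r] by simp
  finally have e2: "sect d (Pw d x (Suc k)) [x] = Pw d x (Suc k)" .
  have e1: "Pw d x (Suc k) [x] = [rot d x (Suc k)]"
    using Suc gen_1_i[OF r] rot_Suc[OF d0] by simp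
  show ?case using e1 e2 by (rule conjI)
qed

definition Hs :: "nat \<Rightarrow> nat \<Rightarrow> (nat list \<Rightarrow> nat list) set" where
  "Hs d x = {s. \<exists>g\<in>Gd d. g [x] = [x] \<and> sect d g [x] = s}"

lemma Hs_intro: "g \<in> Gd d \<Longrightarrow> g [x] = [x] \<Longrightarrow> sect d g [x] = s \<Longrightarrow> s \<in> Hs d x"
  unfolding Hs_def by blast

lemma Hs_id: "x \<in> {1..d} \<Longrightarrow> id \<in> Hs d x"
  by (rule Hs_intro[OF Gd_id]) (auto intro: sect_id)

lemma Hs_comp:
  assumes d: "d \<ge> 2" and x: "x \<in> {1..d}" and s: "s \<in> Hs d x" "t \<in> Hs d x"
  shows "s \<circ> t \<in> Hs d x"
proof -
  obtain g where g: "g \<in> Gd d" "g [x] = [x]" "sect d g [x] = s" using s(1) unfolding Hs_def by blast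
  obtain h where h: "h \<in> Gd d" "h [x] = [x]" "sect d h [x] = t" using s(2) unfolding Hs_def by blast
  have "sect d (g \<circ> h) [x] = s \<circ> t"
    using sect_comp[OF Gd_auto[OF d g(1)] Gd_auto[OF d h(1)]] x g h by simp
  moreover have "(g \<circ> h) [x] = [x]" using g(2) h(2) by simp
  ultimately show ?thesis using Hs_intro[OF Gd_comp[OF g(1) h(1)]] by blast
qed

lemma Hs_inv:
  assumes d: "d \<ge> 2" and x: "x \<in> {1..d}" and s: "s \<in> Hs d x"
  shows "inv s \<in> Hs d x"
proof -
  obtain g where g: "g \<in> Gd d" "g [x] = [x]" "sect d g [x] = s" using s unfolding Hs_def by blast
  have a: "auto d g" using Gd_auto[OF d g(1)] .
  have "inv g [x] = [x]" using g(2) autoD(1)[OF a] by (metis bij_is_inj inv_f_f)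
  moreover have "sect d (inv g) (g [x]) = inv (sect d g [x])" using sect_inv[OF a] x by simp
  then have "sect d (inv g) [x] = inv s" using g(2,3) by simp
  ultimately show ?thesis using Hs_intro[OF Gd_inv'[OF d g(1)]] by blast
qed

lemma Hs_transport:
  assumes d: "d \<ge> 2" and x: "x \<in> {1..d}" and y: "y \<in> {1..d}"
    and h: "h \<in> Gd d" "h [x] = [y]" and g: "g \<in> Gd d" "g [y] = [y]"
  shows "inv (sect d h [x]) \<circ> sect d g [y] \<circ> sect d h [x] \<in> Hs d x"
proof -
  have ah: "auto d h" and ag: "auto d g" using Gd_auto d h g by auto
  define E where "E = inv h \<circ> (g \<circ> h)"
  have EG: "E \<in> Gd d" unfolding E_def using Gd_comp Gd_inv' d h g by blast
  have Ex: "E [x] = [x]" unfolding E_def using h g autoD(1)[OF ah] by (simp add: bij_is_inj inv_f_eq)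
  have "sect d E [x] = sect d (inv h) ((g \<circ> h) [x]) \<circ> sect d (g \<circ> h) [x]"
    unfolding E_def using sect_comp[OF auto_inv[OF ah] auto_comp[OF ag ah]] x by simp
  also have "\<dots> = sect d (inv h) (h [x]) \<circ> (sect d g [y] \<circ> sect d h [x])"
    using sect_comp[OF ag ah] x h g by simp
  also have "\<dots> = inv (sect d h [x]) \<circ> sect d g [y] \<circ> sect d h [x]"
    using sect_inv[OF ah] x by (simp add: comp_assoc)
  finally show ?thesis using Hs_intro[OF EG Ex] by blast
qed

lemma gens_in_Hs:
  assumes d3: "d \<ge> 3" and odd: "odd d" and x: "x \<in> {1..d}"
  shows "\<forall>k. Pw d x k \<in> Hs d x"
proof -
  have d: "d \<ge> 2" and d0: "0 < d" using d3 by auto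
  let ?P = "Pw d x"
  let ?H = "Hs d x"
  have bijP: "bij (?P k)" for k using Gd_auto[OF d Pw_Gd[OF d0]] autoD(1) by blast
  have PiP: "?P k \<circ> inv (?P k) = id" for k using bijP by (meson bij_is_surj surj_iff)
  have iPP: "inv (?P k) \<circ> ?P k = id" for k using bijP by (meson bij_is_inj inv_o_cancel)
  have T: "inv (?P m) \<circ> ?P (Suc (Suc m)) \<in> ?H" for m
  proof -
    define y where "y = rot d x m"
    have yin: "y \<in> {1..d}" using rot_in[OF d0] y_def by simp
    define g0 where "g0 = gen d y \<circ> gen d y"
    have g0G: "g0 \<in> Gd d" unfolding g0_def using Gd_comp gen_Gd yin by blast
    have g0y: "g0 [y] = [y]" unfolding g0_def using gen_1_i[OF yin] gen_1_nxt[OF d yin] by simp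
    have sg0: "sect d g0 [y] = gen d (nxt d y) \<circ> gen d y"
      unfolding g0_def using sect_comp[OF gen_auto[OF d yin] gen_auto[OF d yin]] yin
        gen_1_i[OF yin] sect_gen_nxt[OF d yin] sect_gen_i[OF yin] by simp
    have px: "?P m [x] = [y]" "sect d (?P m) [x] = ?P m" using Pw_x[OF d x, of m] y_def by auto
    have "inv (sect d (?P m) [x]) \<circ> sect d g0 [y] \<circ> sect d (?P m) [x] \<in> ?H"
      using Hs_transport[OF d x yin Pw_Gd[OF d0] px(1) g0G g0y] .
    then have "inv (?P m) \<circ> sect d g0 [y] \<circ> ?P m \<in> ?H" unfolding px(2) .
    moreover have "?P (Suc (Suc m)) = gen d (nxt d y) \<circ> gen d y \<circ> ?P m"
      using rot_Suc[OF d0] y_def by (simp add: comp_assoc)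
    ultimately show ?thesis using sg0 by (simp add: comp_assoc)
  qed
  have step: "?P (Suc (Suc m)) \<in> ?H" if "?P m \<in> ?H" for m
  proof -
    have eq: "?P m \<circ> (inv (?P m) \<circ> ?P (Suc (Suc m))) = ?P (Suc (Suc m))"
      using PiP[of m] by (simp only: comp_assoc[symmetric] id_comp)
    have "?P m \<circ> (inv (?P m) \<circ> ?P (Suc (Suc m))) \<in> ?H" by (rule Hs_comp[OF d x that T[of m]])
    then show ?thesis by (simp only: eq)
  qed
  have even: "?P (2 * m) \<in> ?H" for m
  proof (induction m)
    case 0 show ?case using Hs_id[OF x] by (simp only: mult_0_right Pw.simps(1))
  next
    case (Suc m)
    have e: "2 * Suc m = Suc (Suc (2 * m))" by simp
    show ?case unfolding e by (rule step[OF Suc.IH])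
  qed
  define x' where "x' = rot d x (d - 1)"
  have x'in: "x' \<in> {1..d}" using rot_in[OF d0] x'_def by simp
  have nx': "nxt d x' = x" using rot_Suc[OF d0, of x "d - 1"] rot_d[OF x] d0 x'_def by simp
  obtain q where q: "d = 2 * q + 1" using odd by (rule oddE)
  have "d - 1 = 2 * q" using q by simp
  then have Pd1: "?P (d - 1) \<in> ?H" using even[of q] by (simp only:)
  have Pdx: "?P d [x] = [x]" "sect d (?P d) [x] = ?P d" using Pw_x[OF d x, of d] rot_d[OF x] by auto
  have Pd: "?P d \<in> ?H" by (rule Hs_intro[OF Pw_Gd[OF d0] Pdx])
  have PdE: "?P d = gen d x' \<circ> ?P (d - 1)"
  proof -
    have e: "Suc (d - 1) = d" using d0 by simp
    have "?P (Suc (d - 1)) = gen d (rot d x (d - 1)) \<circ> ?P (d - 1)" by (rule Pw.simps(2))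
    then show ?thesis unfolding e x'_def .
  qed
  have Ax': "gen d x' \<in> ?H"
  proof -
    have "?P d \<circ> inv (?P (d - 1)) = gen d x'"
      unfolding PdE using PiP[of "d - 1"] by (simp only: comp_assoc comp_id)
    moreover have "?P d \<circ> inv (?P (d - 1)) \<in> ?H" by (rule Hs_comp[OF d x Pd Hs_inv[OF d x Pd1]])
    ultimately show ?thesis by (simp only:)
  qed
  have S1: "gen d x' \<circ> gen d x \<in> ?H"
  proof -
    define g0 where "g0 = gen d x' \<circ> gen d x'"
    have g0G: "g0 \<in> Gd d" unfolding g0_def by (rule Gd_comp[OF gen_Gd[OF x'in] gen_Gd[OF x'in]])
    have g1: "gen d x' [x] = [x']" using gen_1_nxt[OF d x'in] nx' by simp
    have g0x: "g0 [x] = [x]" unfolding g0_def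
      using g1 gen_1_i[OF x'in] nx' by simp
    have "sect d g0 [x] = sect d (gen d x') (gen d x' [x]) \<circ> sect d (gen d x') [x]"
      unfolding g0_def by (rule sect_comp[OF gen_auto[OF d x'in] gen_auto[OF d x'in]]) (use x in simp)
    also have "\<dots> = gen d x' \<circ> gen d x"
      unfolding g1 using sect_gen_nxt[OF d x'in] sect_gen_i[OF x'in] nx' by simp
    finally show ?thesis by (rule Hs_intro[OF g0G g0x])
  qed
  have bx': "bij (gen d x')" using gen_auto[OF d x'in] autoD(1) by blast
  have Ax: "gen d x \<in> ?H"
  proof -
    have ii: "inv (gen d x') \<circ> gen d x' = id" using bx' by (simp add: bij_is_inj inv_o_cancel)
    have "inv (gen d x') \<circ> (gen d x' \<circ> gen d x) = gen d x"
      by (simp only: comp_assoc[symmetric] ii id_comp)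
    moreover have "inv (gen d x') \<circ> (gen d x' \<circ> gen d x) \<in> ?H"
      by (rule Hs_comp[OF d x Hs_inv[OF d x Ax'] S1])
    ultimately show ?thesis by (simp only:)
  qed
  have P1: "?P 1 \<in> ?H" using Ax rot_0[OF x] by (simp only: One_nat_def Pw.simps comp_id)
  have oddP: "?P (Suc (2 * m)) \<in> ?H" for m
  proof (induction m)
    case 0 then show ?case using P1 by simp
  next
    case (Suc m)
    have e: "Suc (2 * Suc m) = Suc (Suc (Suc (2 * m)))" by simp
    show ?case unfolding e by (rule step[OF Suc.IH])
  qed
  show ?thesis
  proof
    fix k show "?P k \<in> ?H"
    proof (cases "even k")
      case True then obtain m where "k = 2 * m" by (rule evenE)
      then show ?thesis using even[of m] by (simp only:)
    next
      case False then obtain m where "k = 2 * m + 1" by (rule oddE)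
      then have "k = Suc (2 * m)" by simp
      then show ?thesis using oddP[of m] by (simp only:)
    qed
  qed
qed

lemma gen_in_Hs:
  assumes d3: "d \<ge> 3" and odd: "odd d" and x: "x \<in> {1..d}" and j: "j \<in> {1..d}"
  shows "gen d j \<in> Hs d x"
proof -
  have d: "d \<ge> 2" and d0: "0 < d" using d3 by auto
  obtain k where k: "rot d x k = j" using rot_surj[OF x j] by blast
  have bijP: "bij (Pw d x k)" using Gd_auto[OF d Pw_Gd[OF d0]] autoD(1) by blast
  have pi: "Pw d x k \<circ> inv (Pw d x k) = id" using bijP by (meson bij_is_surj surj_iff)
  have "Pw d x (Suc k) \<circ> inv (Pw d x k) = gen d j"
    unfolding Pw.simps(2) k by (simp only: comp_assoc pi comp_id)
  moreover have "Pw d x (Suc k) \<circ> inv (Pw d x k) \<in> Hs d x"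
  proof -
    have a1: "Pw d x (Suc k) \<in> Hs d x" and a2: "Pw d x k \<in> Hs d x"
      using gens_in_Hs[OF d3 odd x] by blast+
    show ?thesis by (rule Hs_comp[OF d x a1 Hs_inv[OF d x a2]])
  qed
  ultimately show ?thesis by (simp only:)
qed

lemma Gd_sub_Hs:
  assumes d3: "d \<ge> 3" and odd: "odd d" and x: "x \<in> {1..d}"
  shows "g \<in> Gd d \<Longrightarrow> g \<in> Hs d x"
proof (induction rule: Gd.induct)
  have d: "d \<ge> 2" using d3 by simp
  {
  case Gd_id show ?case by (rule Hs_id[OF x])
  next
  case (Gd_gen g i) show ?case
    using Hs_comp[OF d x gen_in_Hs[OF d3 odd x Gd_gen(2)] Gd_gen(3)] .
  next
  case (Gd_inv g i) show ?case
    using Hs_comp[OF d x Hs_inv[OF d x gen_in_Hs[OF d3 odd x Gd_inv(2)]] Gd_inv(3)] .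
  }
qed


lemma level1_trans:
  assumes d: "d \<ge> 2" and x: "x \<in> {1..d}" and y: "y \<in> {1..d}"
  shows "\<exists>g\<in>Gd d. g [x] = [y]"
proof -
  obtain k where "rot d x k = y" using rot_surj[OF x y] by blast
  then show ?thesis using Pw_Gd[of d x k] Pw_x[OF d x, of k] d by auto
qed

lemma Gd_nil: "d \<ge> 2 \<Longrightarrow> g \<in> Gd d \<Longrightarrow> g [] = []"
  using autoD(4)[OF Gd_auto, of d g "[]"] by simp

lemma sph_trans:
  assumes d3: "d \<ge> 3" and odd: "odd d"
  shows "\<forall>u\<in>words d. \<forall>v\<in>words d. length u = k \<longrightarrow> length v = k \<longrightarrow> (\<exists>g\<in>Gd d. g u = v)"
proof (induction k)
  have d: "d \<ge> 2" using d3 by simp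
  {
  case 0 show ?case by (intro ballI impI bexI[of _ id, OF _ Gd.Gd_id]) simp
  next
  case (Suc k)
  show ?case
  proof (intro ballI impI)
    fix u v assume u: "u \<in> words d" and v: "v \<in> words d" and lu: "length u = Suc k" and lv: "length v = Suc k"
    obtain x u' where ux: "u = x # u'" using lu by (cases u) auto
    obtain y v' where vy: "v = y # v'" using lv by (cases v) auto
    have xin: "x \<in> {1..d}" and u'w: "u' \<in> words d" using u ux by auto
    have yin: "y \<in> {1..d}" and v'w: "v' \<in> words d" using v vy by auto
    obtain g1 where g1: "g1 \<in> Gd d" "g1 [x] = [y]" using level1_trans[OF d xin yin] by blast
    have a1: "auto d g1" using Gd_auto[OF d g1(1)] .
    define u'' where "u'' = sect d g1 [x] u'"
    have u''w: "u'' \<in> words d" using sect_word[OF a1] xin u'w u''_def by simp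
    have lu'': "length u'' = k" using sect_length[OF a1] xin u'w u''_def lu ux by simp
    have g1u: "g1 u = y # u''" using auto_split[OF a1, of "[x]" u'] xin u'w g1(2) ux u''_def by simp
    obtain h where h: "h \<in> Gd d" "h u'' = v'" using Suc u''w v'w lu'' lv vy by auto
    obtain g2 where g2: "g2 \<in> Gd d" "g2 [y] = [y]" "sect d g2 [y] = h"
      using Gd_sub_Hs[OF d3 odd yin h(1)] unfolding Hs_def by blast
    have "g2 (y # u'') = y # v'"
      using auto_split[OF Gd_auto[OF d g2(1)], of "[y]" u''] yin u''w g2 h by simp
    then have "(g2 \<circ> g1) u = v" using g1u vy by simp
    then show "\<exists>g\<in>Gd d. g u = v" using Gd_comp[OF g2(1) g1(1)] by blast
  qed
  }
qed

lemma fractal_aux: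
  assumes d3: "d \<ge> 3" and odd: "odd d"
  shows "u \<in> words d \<Longrightarrow> h \<in> Gd d \<Longrightarrow> \<exists>g\<in>Gd d. g u = u \<and> sect d g u = h"
proof (induction u arbitrary: h)
  have d: "d \<ge> 2" using d3 by simp
  {
  case Nil then show ?case using Gd_nil[OF d] sect_Nil[OF Gd_auto[OF d]] by blast
  next
  case (Cons x u)
  have xin: "x \<in> {1..d}" and uw: "u \<in> words d" using Cons.prems by auto
  obtain g' where g': "g' \<in> Gd d" "g' u = u" "sect d g' u = h" using Cons.IH[OF uw Cons.prems(2)] by blast
  obtain g where g: "g \<in> Gd d" "g [x] = [x]" "sect d g [x] = g'"
    using Gd_sub_Hs[OF d3 odd xin g'(1)] unfolding Hs_def by blast
  have "g (x # u) = x # u"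
    using auto_split[OF Gd_auto[OF d g(1)], of "[x]" u] xin uw g g' by simp
  moreover have "sect d g (x # u) = h"
    using sect_append[of "[x]" d u g] xin uw g g' by simp
  ultimately show ?case using g(1) by blast
  }
qed

theorem theorem4p6:
  fixes d :: nat
  assumes "d \<ge> 3" and "odd d"
  shows "spherically_transitive d (Gd d) \<and> fractal d (Gd d)"
proof
  show "spherically_transitive d (Gd d)"
    unfolding spherically_transitive_def using sph_trans[OF assms] by blast
  have d: "d \<ge> 2" using assms by simp
  show "fractal d (Gd d)"
    unfolding fractal_def
  proof (intro ballI equalityI subsetI)
    fix u s assume u: "u \<in> words d" and "s \<in> (\<lambda>g. sect d g u) ` stabilizer (Gd d) u"
    then obtain g where "g \<in> Gd d" "s = sect d g u" unfolding stabilizer_def by blast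
    then show "s \<in> Gd d" using sect_Gd[OF d] u by simp
  next
    fix u h assume u: "u \<in> words d" and h: "h \<in> Gd d"
    obtain g where "g \<in> Gd d" "g u = u" "sect d g u = h" using fractal_aux[OF assms u h] by blast
    then show "h \<in> (\<lambda>g. sect d g u) ` stabilizer (Gd d) u" unfolding stabilizer_def by force
  qed
qed

end
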